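(* Let $q$ be an odd prime power, $d$ a positive integer, $\varphi_d$ the coloring defined below, and let $p\ge 2$ and $T \ge 0$ be integers. Let $S\subseteq(\mathbb{F}_q^* )^d$ be a set of $p$ vectors with a leftover structure under $\varphi_d$. If $T\ge 1$, suppose further that $a_1,\dots,a_T\in(\mathbb{F}_q^* )^d$ (distinct, and not in $S$) and $\alpha_1,\dots,\alpha_T\in C_d$ satisfy $\varphi_d(a_i,a_j) = \alpha_i$ for all $1\le i<j\le T$ and $\varphi_d(a_i,s) = \alpha_i$ for all $1 \le i\le T$ and all $s\in S$. Then there is a sequence of positive integers $x_1,\dots,x_t$ with $\sum_{i=1}^t x_i = p-1$ such that, writing $s_1 = 0$ and $s_i = \sum_{j=1}^{i-1} x_j$ for $i \ge 2$, for every $i=1,\dots,t$: (1) $1\le x_i \le \lfloor (p-s_i)/2\rfloor$; (2) $\lceil\log_2 x_i\rceil + \lceil \log_2(p-s_i-x_i)\rceil \le d-1$; (3) $\lceil \log_2(p-s_i-x_i)\rceil \le d - i - T$.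
   Context: $\mathbb{F}_q^*$ is the set of nonzero elements of $\mathbb{F}_q$, endowed with an arbitrary fixed linear order; $(\mathbb{F}_q^* )^d$ is ordered lexicographically with respect to it. Let $C_d = \mathrm{DOT} \sqcup \mathrm{ZERO}\sqcup\mathrm{UP}\sqcup\mathrm{DOWN}$, where $\mathrm{DOT} = \mathbb{F}_q^*$ and ZERO, UP, DOWN are three disjoint copies of $\{1,\dots,d\}\times \mathbb{F}_q$. For distinct $x<y$ in $(\mathbb{F}_q^* )^d$, let $i$ be the first coordinate where $x$ and $y$ differ, and $x\cdot y$ the standard dot product; $\varphi_d(x,y)=\varphi_d(y,x)$ is $(i,x_i+y_i)$ in ZERO if $x\cdot y=0$; $(i,x_i+y_i)$ in UP if $x\cdot y\ne 0$ and $x\cdot y=x\cdot x$; $(i,x_i+y_i)$ in DOWN if $x\cdot y\notin\{0,x\cdot x\}$ and $x\cdot y=y\cdot y$; and $x\cdot y\in\mathrm{DOT}$ otherwise. For a vertex set $A$, $\varphi_d(A)$ is the set of colors on pairs inside $A$. $S$ has a leftover structure under $\varphi_d$ if $|S|=1$, or $S$ has a partition $S=A\cup B$ into nonempty sets such that $A$ and $B$ each have a leftover structure, $\varphi_d(A)\cap\varphi_d(B)=\emptyset$, and there is a color $\gamma$ with $\varphi_d(a,b)=\gamma$ for all $a\in A$, $b\in B$ and $\gamma\notin\varphi_d(A)\cup\varphi_d(B)$. *)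

theory Defs
  imports Complex_Main
begin

text \<open>The linear order on F_q^* is a parameter R (a reflexive linear order relation on the
  nonzero elements); (F_q^*)^d is ordered lexicographically with respect to it.\<close>

definition vecs :: "nat \<Rightarrow> 'a::field list set" where
  "vecs d = {x. length x = d \<and> 0 \<notin> set x}"

definition dotp :: "'a::field list \<Rightarrow> 'a list \<Rightarrow> 'a" where
  "dotp x y = (\<Sum>k<length x. x ! k * y ! k)"

text \<open>First (0-based) index where x and y differ.\<close>
definition first_diff :: "'a list \<Rightarrow> 'a list \<Rightarrow> nat" where
  "first_diff x y = (LEAST k. x ! k \<noteq> y ! k)"

definition lexless :: "'a rel \<Rightarrow> 'a list \<Rightarrow> 'a list \<Rightarrow> bool" where
  "lexless R x y \<longleftrightarrow> x \<noteq> y \<and>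
     (x ! first_diff x y, y ! first_diff x y) \<in> R"

text \<open>The colour set C_d: DOT = F_q^*, and ZERO, UP, DOWN copies of {1..d} x F_q
  (coordinates are stored 1-based).\<close>
datatype 'a color = DOT 'a | ZERO nat 'a | UP nat 'a | DOWN nat 'a

definition col_ord :: "'a::field list \<Rightarrow> 'a list \<Rightarrow> 'a color" where
  "col_ord x y = (let i = first_diff x y; c = x ! i + y ! i in
     if dotp x y = 0 then ZERO (Suc i) c
     else if dotp x y = dotp x x then UP (Suc i) c
     else if dotp x y = dotp y y then DOWN (Suc i) c
     else DOT (dotp x y))"

definition phi :: "'a::field rel \<Rightarrow> 'a list \<Rightarrow> 'a list \<Rightarrow> 'a color" where
  "phi R x y = (if lexless R x y then col_ord x y else col_ord y x)"

definition colors :: "'a::field rel \<Rightarrow> 'a list set \<Rightarrow> 'a color set" where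
  "colors R A = {phi R x y | x y. x \<in> A \<and> y \<in> A \<and> x \<noteq> y}"

inductive leftover :: "'a::field rel \<Rightarrow> 'a list set \<Rightarrow> bool" for R where
  single: "card S = 1 \<Longrightarrow> leftover R S"
| split: "\<lbrakk> S = A \<union> B; A \<inter> B = {}; A \<noteq> {}; B \<noteq> {};
            leftover R A; leftover R B; colors R A \<inter> colors R B = {};
            \<forall>a\<in>A. \<forall>b\<in>B. phi R a b = \<gamma>;
            \<gamma> \<notin> colors R A \<union> colors R B \<rbrakk> \<Longrightarrow> leftover R S"

end

theory Submission
  imports Defs
begin


definition fdot :: "nat \<Rightarrow> (nat \<Rightarrow> 'a::field) \<Rightarrow> (nat \<Rightarrow> 'a) \<Rightarrow> 'a" where
  "fdot n u w = (\<Sum>i<n. u i * w i)"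
definition inV :: "nat \<Rightarrow> (nat \<Rightarrow> 'a::zero) \<Rightarrow> bool" where
  "inV n u \<longleftrightarrow> (\<forall>i\<ge>n. u i = 0)"
definition indep :: "'i set \<Rightarrow> ('i \<Rightarrow> nat \<Rightarrow> 'a::field) \<Rightarrow> bool" where
  "indep I us \<longleftrightarrow> (\<forall>c. (\<forall>i. (\<Sum>j\<in>I. c j * us j i) = 0) \<longrightarrow> (\<forall>j\<in>I. c j = 0))"

lemma fdot_comm: "fdot n u w = fdot n w u"
  unfolding fdot_def by (simp add: mult.commute)

lemma indep_zero_empty:
  fixes us :: "'i \<Rightarrow> nat \<Rightarrow> 'a::field"
  assumes "indep I us" "\<forall>j\<in>I. \<forall>i. us j i = 0" shows "I = {}"
proof (rule ccontr)
  assume "I \<noteq> {}"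
  then obtain j where "j \<in> I" by auto
  have H: "\<forall>i. (\<Sum>j\<in>I. (\<lambda>_. 1::'a) j * us j i) = 0" using assms(2) by simp
  show False using spec[OF assms(1)[unfolded indep_def], of "\<lambda>_. 1"] H \<open>j \<in> I\<close> by simp
qed

lemma elim_step:
  fixes us :: "'i \<Rightarrow> nat \<Rightarrow> 'a::field" and ws :: "'i \<Rightarrow> nat \<Rightarrow> 'a"
  assumes IH: "\<forall>(I::'i set) (J::'i set) (us::'i \<Rightarrow> nat \<Rightarrow> 'a) ws. finite I \<longrightarrow> finite J \<longrightarrow> (\<forall>j\<in>I. inV n (us j)) \<longrightarrow> (\<forall>j\<in>J. inV n (ws j))
     \<longrightarrow> indep I us \<longrightarrow> indep J ws \<longrightarrow> (\<forall>a\<in>I. \<forall>b\<in>J. fdot n (us a) (ws b) = 0) \<longrightarrow> card I + card J \<le> n"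
  and fin: "finite I" "finite J"
  and V: "\<forall>j\<in>I. inV (Suc n) (us j)" "\<forall>j\<in>J. inV (Suc n) (ws j)"
  and ind: "indep I us" "indep J ws"
  and orth: "\<forall>a\<in>I. \<forall>b\<in>J. fdot (Suc n) (us a) (ws b) = 0"
  and a0: "a0 \<in> I" "us a0 n \<noteq> 0"
  shows "card I + card J \<le> Suc n"
proof -
  define u0 where "u0 = us a0"
  define I' where "I' = I - {a0}"
  define us' where "us' = (\<lambda>a i. us a i - (us a n / u0 n) * u0 i)"
  define ws' where "ws' = (\<lambda>b i. if i < n then ws b i else 0)"
  have u0n: "u0 n \<noteq> 0" using a0 u0_def by simp
  have V1: "\<forall>j\<in>I'. inV n (us' j)"
  proof
    fix j assume "j \<in> I'"
    then have "inV (Suc n) (us j)" using V I'_def by auto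
    moreover have "inV (Suc n) u0" using V a0 u0_def by auto
    ultimately show "inV n (us' j)" using u0n unfolding inV_def us'_def
    proof (intro allI impI)
      fix i assume A: "\<forall>i\<ge>Suc n. us j i = 0" "\<forall>i\<ge>Suc n. u0 i = 0" "u0 n \<noteq> 0" "n \<le> i"
      show "us j i - us j n / u0 n * u0 i = 0"
      proof (cases "i = n")
        case True then show ?thesis using A(3) by simp
      next
        case False then show ?thesis using A by simp
      qed
    qed
  qed
  have V2: "\<forall>j\<in>J. inV n (ws' j)" unfolding inV_def ws'_def by auto
  have ind1: "indep I' us'"
    unfolding indep_def
  proof (intro allI impI)
    fix c assume H: "\<forall>i. (\<Sum>j\<in>I'. c j * us' j i) = 0"
    define c' where "c' = c(a0 := - (\<Sum>a\<in>I'. c a * (us a n / u0 n)))"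
    have "\<forall>i. (\<Sum>j\<in>I. c' j * us j i) = 0"
    proof
      fix i
      have "(\<Sum>j\<in>I. c' j * us j i) = c' a0 * us a0 i + (\<Sum>j\<in>I'. c' j * us j i)"
        using fin a0 I'_def by (simp add: sum.remove)
      also have "(\<Sum>j\<in>I'. c' j * us j i) = (\<Sum>j\<in>I'. c j * us j i)"
        using I'_def c'_def by (intro sum.cong) auto
      also have "c' a0 * us a0 i = - (\<Sum>a\<in>I'. c a * (us a n / u0 n) * u0 i)"
        using c'_def u0_def by (simp add: sum_distrib_right)
      finally have "(\<Sum>j\<in>I. c' j * us j i) = (\<Sum>j\<in>I'. c j * us j i) - (\<Sum>a\<in>I'. c a * (us a n / u0 n) * u0 i)"
        by simp
      also have "\<dots> = (\<Sum>j\<in>I'. c j * us' j i)"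
        unfolding us'_def by (simp add: sum_subtractf algebra_simps)
      finally show "(\<Sum>j\<in>I. c' j * us j i) = 0" using H by simp
    qed
    then have "\<forall>j\<in>I. c' j = 0" using ind(1) unfolding indep_def by blast
    then show "\<forall>j\<in>I'. c j = 0"
    proof (intro ballI)
      fix j assume "\<forall>j\<in>I. c' j = 0" "j \<in> I'"
      then have "c' j = 0" "j \<noteq> a0" using I'_def by auto
      then show "c j = 0" using c'_def by simp
    qed
  qed
  have ind2: "indep J ws'"
    unfolding indep_def
  proof (intro allI impI)
    fix c assume H: "\<forall>i. (\<Sum>j\<in>J. c j * ws' j i) = 0"
    define w where "w = (\<lambda>i. \<Sum>j\<in>J. c j * ws j i)"
    have wi: "w i = 0" if "i \<noteq> n" for i
    proof (cases "i < n")
      case True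
      then show ?thesis using H[rule_format, of i] unfolding w_def ws'_def by simp
    next
      case False
      then have "i \<ge> Suc n" using that by simp
      then show ?thesis unfolding w_def using V(2) unfolding inV_def by simp
    qed
    have "fdot (Suc n) u0 w = (\<Sum>j\<in>J. c j * fdot (Suc n) u0 (ws j))"
      unfolding fdot_def w_def sum_distrib_left
      by (subst sum.swap) (simp add: mult.left_commute)
    also have "\<dots> = 0" using orth a0 u0_def by simp
    finally have "fdot (Suc n) u0 w = 0" .
    moreover have "fdot (Suc n) u0 w = u0 n * w n"
      unfolding fdot_def using wi by simp
    ultimately have "w n = 0" using u0n by simp
    then have "\<forall>i. w i = 0" using wi by metis
    then show "\<forall>j\<in>J. c j = 0" using ind(2) unfolding indep_def w_def by blast
  qed
  have orth': "\<forall>a\<in>I'. \<forall>b\<in>J. fdot n (us' a) (ws' b) = 0"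
  proof (intro ballI)
    fix a b assume "a \<in> I'" "b \<in> J"
    have "us' a n = 0" unfolding us'_def using u0n by simp
    then have "fdot n (us' a) (ws' b) = fdot (Suc n) (us' a) (ws b)"
      unfolding fdot_def ws'_def by simp
    also have "\<dots> = fdot (Suc n) (us a) (ws b) - (us a n / u0 n) * fdot (Suc n) u0 (ws b)"
      unfolding fdot_def us'_def by (simp add: sum_subtractf sum_distrib_left algebra_simps)
    also have "\<dots> = 0" using orth \<open>a \<in> I'\<close> \<open>b \<in> J\<close> a0 u0_def I'_def by simp
    finally show "fdot n (us' a) (ws' b) = 0" .
  qed
  have "card I' + card J \<le> n"
    using IH[rule_format, of I' J us' ws'] fin(2) V1 V2 ind1 ind2 orth' fin I'_def by simp
  moreover have "card I' = card I - 1" using I'_def fin a0 by simp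
  moreover have "card I > 0" using fin a0 card_gt_0_iff by blast
  ultimately show ?thesis by simp
qed

lemma LA_bound:
  fixes I J :: "'i set" and us ws :: "'i \<Rightarrow> nat \<Rightarrow> 'a::field"
  shows "finite I \<Longrightarrow> finite J \<Longrightarrow> (\<forall>j\<in>I. inV n (us j)) \<Longrightarrow> (\<forall>j\<in>J. inV n (ws j))
     \<Longrightarrow> indep I us \<Longrightarrow> indep J ws \<Longrightarrow> (\<forall>a\<in>I. \<forall>b\<in>J. fdot n (us a) (ws b) = 0) \<Longrightarrow> card I + card J \<le> n"
proof (induction n arbitrary: I J us ws)
  case 0
  have "I = {}" using indep_zero_empty[OF 0(5)] 0(3) unfolding inV_def by simp
  moreover have "J = {}" using indep_zero_empty[OF 0(6)] 0(4) unfolding inV_def by simp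
  ultimately show ?case by simp
next
  case (Suc n)
  have IH: "\<forall>(I::'i set) (J::'i set) (us::'i \<Rightarrow> nat \<Rightarrow> 'a) ws. finite I \<longrightarrow> finite J \<longrightarrow> (\<forall>j\<in>I. inV n (us j)) \<longrightarrow> (\<forall>j\<in>J. inV n (ws j))
     \<longrightarrow> indep I us \<longrightarrow> indep J ws \<longrightarrow> (\<forall>a\<in>I. \<forall>b\<in>J. fdot n (us a) (ws b) = 0) \<longrightarrow> card I + card J \<le> n"
    apply (intro allI impI) apply (rule Suc.IH) apply assumption+ done
  show ?case
  proof (cases "\<exists>a0\<in>I. us a0 n \<noteq> 0")
    case True
    then obtain a0 where "a0 \<in> I" "us a0 n \<noteq> 0" by blast
    then show ?thesis by (rule elim_step[OF IH Suc.prems])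
  next
    case F1: False
    show ?thesis
    proof (cases "\<exists>b0\<in>J. ws b0 n \<noteq> 0")
      case True
      then obtain b0 where "b0 \<in> J" "ws b0 n \<noteq> 0" by blast
      moreover have "\<forall>a\<in>J. \<forall>b\<in>I. fdot (Suc n) (ws a) (us b) = 0"
        using Suc.prems(7) fdot_comm by metis
      ultimately have "card J + card I \<le> Suc n"
        by (intro elim_step[OF IH Suc.prems(2,1,4,3,6,5)]) auto
      then show ?thesis by simp
    next
      case False
      have "\<forall>j\<in>I. inV n (us j)" using F1 Suc.prems(3) unfolding inV_def
        by (metis le_antisym not_less_eq_eq)
      moreover have "\<forall>j\<in>J. inV n (ws j)" using False Suc.prems(4) unfolding inV_def
        by (metis le_antisym not_less_eq_eq)
      moreover have "\<forall>a\<in>I. \<forall>b\<in>J. fdot n (us a) (ws b) = 0"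
        using Suc.prems(7) F1 unfolding fdot_def by simp
      ultimately have "card I + card J \<le> n"
        using Suc.IH[OF Suc.prems(1,2) _ _ Suc.prems(5,6)] by blast
      then show ?thesis by simp
    qed
  qed
qed



definition vf :: "'a::field list \<Rightarrow> nat \<Rightarrow> 'a" where
  "vf x = (\<lambda>i. if i < length x then x ! i else 0)"

lemma dotp_vf: "length x = d \<Longrightarrow> length y = d \<Longrightarrow> dotp x y = fdot d (vf x) (vf y)"
  unfolding dotp_def fdot_def vf_def by (intro sum.cong) auto

lemma inV_vf: "length x = d \<Longrightarrow> inV d (vf x)"
  unfolding inV_def vf_def by auto

lemma dotp_comm: "length x = length y \<Longrightarrow> dotp x y = dotp y x"
  unfolding dotp_def by (simp add: mult.commute)

lemma fdot_e: "fdot d (\<lambda>i. if i = k then 1 else 0) u = (if k < d then u k else 0)"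
  unfolding fdot_def by (simp add: if_distrib[where f="\<lambda>z. z * _"] sum.delta cong: if_cong)

lemma fd_props:
  assumes "length x = length y" "x \<noteq> y"
  shows "first_diff x y < length x \<and> x ! first_diff x y \<noteq> y ! first_diff x y
         \<and> (\<forall>k < first_diff x y. x ! k = y ! k)"
proof -
  obtain k where k: "k < length x" "x ! k \<noteq> y ! k"
    using assms nth_equalityI by blast
  have 1: "x ! first_diff x y \<noteq> y ! first_diff x y"
    unfolding first_diff_def by (rule LeastI[of _ k]) (use k in auto)
  have 2: "first_diff x y \<le> k" unfolding first_diff_def by (rule Least_le) (use k in auto)
  have 3: "\<forall>j < first_diff x y. x ! j = y ! j"
    unfolding first_diff_def using not_less_Least by blast
  show ?thesis using 1 2 3 k by auto
qed

lemma fd_sym: "first_diff x y = first_diff y x"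
  unfolding first_diff_def by (metis)

lemma col_ord_cases:
  "col_ord x y = \<gamma> \<Longrightarrow>
    (\<gamma> = DOT (dotp x y) \<and> dotp x y \<noteq> 0 \<and> dotp x y \<noteq> dotp x x \<and> dotp x y \<noteq> dotp y y) \<or>
    (\<gamma> = ZERO (Suc (first_diff x y)) (x ! first_diff x y + y ! first_diff x y) \<and> dotp x y = 0) \<or>
    (\<gamma> = UP (Suc (first_diff x y)) (x ! first_diff x y + y ! first_diff x y) \<and> dotp x y = dotp x x) \<or>
    (\<gamma> = DOWN (Suc (first_diff x y)) (x ! first_diff x y + y ! first_diff x y) \<and> dotp x y = dotp y y)"
  by (auto simp: col_ord_def Let_def split: if_splits)

fun isdot :: "'a color \<Rightarrow> bool" where
  "isdot (DOT v) = True" | "isdot _ = False"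
fun cidx :: "'a color \<Rightarrow> nat" where
  "cidx (DOT v) = 0" | "cidx (ZERO i c) = i" | "cidx (UP i c) = i" | "cidx (DOWN i c) = i"
fun csum :: "'a color \<Rightarrow> 'a" where
  "csum (DOT v) = v" | "csum (ZERO i c) = c" | "csum (UP i c) = c" | "csum (DOWN i c) = c"

lemma phi_info:
  assumes "length x = length y" "phi R x y = \<gamma>"
  shows "(isdot \<gamma> \<longrightarrow> \<gamma> = DOT (dotp x y) \<and> dotp x y \<noteq> 0 \<and> dotp x y \<noteq> dotp x x) \<and>
         (\<not> isdot \<gamma> \<longrightarrow> cidx \<gamma> = Suc (first_diff x y) \<and> csum \<gamma> = x ! first_diff x y + y ! first_diff x y)"
proof (cases "lexless R x y")
  case True
  then have "col_ord x y = \<gamma>" using assms unfolding phi_def by simp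
  from col_ord_cases[OF this] show ?thesis by auto
next
  case False
  then have "col_ord y x = \<gamma>" using assms unfolding phi_def by simp
  from col_ord_cases[OF this] show ?thesis
    using dotp_comm[OF assms(1)] fd_sym[of x y] by (auto simp: add.commute)
qed

lemma Pin:
  assumes x: "length x = d" and Y: "\<forall>y\<in>Y. length y = d \<and> y \<noteq> x \<and> phi R x y = \<gamma>"
  shows "\<exists>g \<beta>. (\<forall>y\<in>Y. fdot d g (vf y) = \<beta>) \<and> fdot d g (vf x) \<noteq> \<beta>"
proof (cases "Y = {}")
  case True
  then show ?thesis by (intro exI[of _ "\<lambda>_. 0"] exI[of _ 1]) (simp add: fdot_def)
next
  case False
  then obtain y0 where y0: "y0 \<in> Y" by auto
  show ?thesis
  proof (cases "isdot \<gamma>")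
    case True
    have "\<forall>y\<in>Y. fdot d (vf x) (vf y) = dotp x y0"
    proof
      fix y assume "y \<in> Y"
      then have "\<gamma> = DOT (dotp x y)" "\<gamma> = DOT (dotp x y0)"
        using phi_info[of x y R \<gamma>] phi_info[of x y0 R \<gamma>] Y y0 x True by auto
      then show "fdot d (vf x) (vf y) = dotp x y0"
        using dotp_vf[of x d y] Y \<open>y \<in> Y\<close> x by simp
    qed
    moreover have "fdot d (vf x) (vf x) \<noteq> dotp x y0"
      using phi_info[of x y0 R \<gamma>] Y y0 x True dotp_vf[of x d x] by auto
    ultimately show ?thesis by blast
  next
    case False
    define k0 where "k0 = first_diff x y0"
    have fd0: "k0 < d" "x ! k0 \<noteq> y0 ! k0"
      using fd_props[of x y0] Y y0 x k0_def by auto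
    have c0: "csum \<gamma> = x ! k0 + y0 ! k0"
      using phi_info[of x y0 R \<gamma>] Y y0 x False k0_def by auto
    have "\<forall>y\<in>Y. fdot d (\<lambda>i. if i = k0 then 1 else 0) (vf y) = y0 ! k0"
    proof
      fix y assume "y \<in> Y"
      have "cidx \<gamma> = Suc (first_diff x y)" "cidx \<gamma> = Suc k0"
           "csum \<gamma> = x ! first_diff x y + y ! first_diff x y"
        using phi_info[of x y R \<gamma>] phi_info[of x y0 R \<gamma>] Y y0 x False \<open>y \<in> Y\<close> k0_def by auto
      then have "y ! k0 = y0 ! k0" using c0 by simp
      moreover have "fdot d (\<lambda>i. if i = k0 then 1 else 0) (vf y) = vf y k0"
        using fdot_e[of d k0 "vf y"] fd0 by simp
      ultimately show "fdot d (\<lambda>i. if i = k0 then 1 else 0) (vf y) = y0 ! k0"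
        using fd0 Y \<open>y \<in> Y\<close> by (simp add: vf_def)
    qed
    moreover have "fdot d (\<lambda>i. if i = k0 then 1 else 0) (vf x) \<noteq> y0 ! k0"
      using fdot_e[of d k0 "vf x"] fd0 x by (simp add: vf_def)
    ultimately show ?thesis by blast
  qed
qed

lemma fdot_lc: "fdot n g (\<lambda>i. \<Sum>m\<in>M. c m * v m i) = (\<Sum>m\<in>M. c m * fdot n g (v m))"
  unfolding fdot_def sum_distrib_left by (subst sum.swap) (simp add: mult.left_commute)

lemma fdot_diff: "fdot n g (\<lambda>i. u i - w i) = fdot n g u - fdot n g w"
  unfolding fdot_def by (simp add: right_diff_distrib sum_subtractf)

lemma tri_indep:
  fixes pts :: "nat \<Rightarrow> nat \<Rightarrow> 'a::field"
  assumes A: "\<forall>j<k. \<forall>m. j < m \<and> m \<le> k \<longrightarrow> fdot n (g j) (pts m) = \<beta> j"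
    and B: "\<forall>j<k. fdot n (g j) (pts j) \<noteq> \<beta> j"
  shows "indep {..<k} (\<lambda>j i. pts j i - pts k i)"
  unfolding indep_def
proof (intro allI impI)
  fix c assume H: "\<forall>i. (\<Sum>j\<in>{..<k}. c j * (pts j i - pts k i)) = 0"
  show "\<forall>j\<in>{..<k}. c j = 0"
  proof (rule ccontr)
    assume "\<not> (\<forall>j\<in>{..<k}. c j = 0)"
    then have ex: "\<exists>j. j < k \<and> c j \<noteq> 0" by auto
    define j where "j = (LEAST j. j < k \<and> c j \<noteq> 0)"
    have j: "j < k" "c j \<noteq> 0" using LeastI_ex[OF ex] j_def by auto
    have below: "\<forall>m<j. c m = 0"
    proof (intro allI impI)
      fix m assume "m < j"
      then have "\<not> (m < k \<and> c m \<noteq> 0)" unfolding j_def by (rule not_less_Least)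
      then show "c m = 0" using \<open>m < j\<close> j by auto
    qed
    have "fdot n (g j) (\<lambda>i. \<Sum>m\<in>{..<k}. c m * (pts m i - pts k i)) = 0"
      using H unfolding fdot_def by simp
    also have "fdot n (g j) (\<lambda>i. \<Sum>m\<in>{..<k}. c m * (pts m i - pts k i))
        = (\<Sum>m\<in>{..<k}. c m * (fdot n (g j) (pts m) - fdot n (g j) (pts k)))"
      by (subst fdot_lc[where v="\<lambda>m i. pts m i - pts k i"]) (simp add: fdot_diff)
    also have "\<dots> = (\<Sum>m\<in>{..<k}. if m = j then c j * (fdot n (g j) (pts j) - \<beta> j) else 0)"
    proof (intro sum.cong refl)
      fix m assume m: "m \<in> {..<k}"
      have pk: "fdot n (g j) (pts k) = \<beta> j" using A j by auto
      show "c m * (fdot n (g j) (pts m) - fdot n (g j) (pts k)) =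
            (if m = j then c j * (fdot n (g j) (pts j) - \<beta> j) else 0)"
      proof (cases "m < j")
        case True then show ?thesis using below by simp
      next
        case False
        show ?thesis
        proof (cases "m = j")
          case True then show ?thesis using pk by simp
        next
          case False
          then have "j < m" "m \<le> k" using \<open>\<not> m < j\<close> m by auto
          then show ?thesis using A j pk False by auto
        qed
      qed
    qed
    also have "\<dots> = c j * (fdot n (g j) (pts j) - \<beta> j)"
      using j by (simp add: sum.delta)
    finally have "c j * (fdot n (g j) (pts j) - \<beta> j) = 0" by simp
    then show False using j B by auto
  qed
qed

lemma tri_indep_pts:
  fixes pts :: "nat \<Rightarrow> nat \<Rightarrow> 'a::field"
  assumes A: "\<forall>j<k. \<forall>m. j < m \<and> m \<le> k \<longrightarrow> fdot n (g j) (pts m) = \<beta> j"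
    and B: "\<forall>j<k. fdot n (g j) (pts j) \<noteq> \<beta> j"
    and C: "\<forall>m\<le>k. fdot n h (pts m) = b" and b: "b \<noteq> 0"
  shows "indep {..<Suc k} pts"
  unfolding indep_def
proof (intro allI impI)
  fix c assume H: "\<forall>i. (\<Sum>j\<in>{..<Suc k}. c j * pts j i) = 0"
  have "fdot n h (\<lambda>i. \<Sum>j\<in>{..<Suc k}. c j * pts j i) = 0"
    using H unfolding fdot_def by simp
  then have "(\<Sum>j\<in>{..<Suc k}. c j * fdot n h (pts j)) = 0" by (simp only: fdot_lc)
  also have "(\<Sum>j\<in>{..<Suc k}. c j * fdot n h (pts j)) = (\<Sum>j\<in>{..<Suc k}. c j) * b"
    using C by (simp add: sum_distrib_right del: sum.lessThan_Suc)
  finally have s0: "(\<Sum>j\<in>{..<Suc k}. c j) = 0" using b by simp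
  then have ck: "c k = - (\<Sum>j\<in>{..<k}. c j)" by (simp add: eq_neg_iff_add_eq_0 add.commute)
  have "\<forall>i. (\<Sum>j\<in>{..<k}. c j * (pts j i - pts k i)) = 0"
  proof
    fix i
    have "(\<Sum>j\<in>{..<k}. c j * (pts j i - pts k i)) = (\<Sum>j\<in>{..<k}. c j * pts j i) - (\<Sum>j\<in>{..<k}. c j) * pts k i"
      by (simp add: right_diff_distrib sum_subtractf sum_distrib_right)
    also have "\<dots> = (\<Sum>j\<in>{..<Suc k}. c j * pts j i)" using ck by simp
    finally show "(\<Sum>j\<in>{..<k}. c j * (pts j i - pts k i)) = 0" using H by simp
  qed
  then have "\<forall>j\<in>{..<k}. c j = 0"
    using tri_indep[OF A B] unfolding indep_def by blast
  moreover then have "c k = 0" using ck by simp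
  ultimately show "\<forall>j\<in>{..<Suc k}. c j = 0" using less_Suc_eq by auto
qed



definition pinned :: "'a::field rel \<Rightarrow> 'a list list \<Rightarrow> bool" where
  "pinned R L \<longleftrightarrow> distinct L \<and>
     (\<forall>j<length L. \<exists>\<gamma>. \<forall>m. j < m \<and> m < length L \<longrightarrow> phi R (L ! j) (L ! m) = \<gamma>)"

lemma leftover_fin: "leftover R X \<Longrightarrow> finite X \<and> X \<noteq> {}"
  by (induction rule: leftover.induct) (auto simp: card_1_singleton_iff)

lemma phi_sym:
  assumes R: "linear_order_on (UNIV - {0}) R"
    and x: "x \<in> vecs d" and y: "y \<in> vecs d" and xy: "x \<noteq> y"
  shows "phi R x y = phi R y x"
proof -
  define k where "k = first_diff x y"
  have lx: "length x = d" "length y = d" "0 \<notin> set x" "0 \<notin> set y" using x y by (auto simp: vecs_def)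
  have k: "k < d" "x ! k \<noteq> y ! k" using fd_props[of x y] lx xy k_def by auto
  have nz: "x ! k \<noteq> 0" "y ! k \<noteq> 0" using lx k by (metis nth_mem)+
  have ky: "first_diff y x = k" using fd_sym k_def by metis
  have tot: "(x ! k, y ! k) \<in> R \<or> (y ! k, x ! k) \<in> R"
    using R nz k unfolding linear_order_on_def total_on_def by auto
  have anti: "\<not> ((x ! k, y ! k) \<in> R \<and> (y ! k, x ! k) \<in> R)"
    using R k unfolding linear_order_on_def partial_order_on_def antisym_def by blast
  have "lexless R x y \<longleftrightarrow> \<not> lexless R y x"
    unfolding lexless_def using xy k_def ky tot anti by auto
  then show ?thesis unfolding phi_def by auto
qed

lemma pinned_cons:
  assumes "pinned R L" "a \<notin> set L" "\<forall>y\<in>set L. phi R a y = \<gamma>"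
  shows "pinned R (a # L)"
  unfolding pinned_def
proof (intro conjI allI impI)
  show "distinct (a # L)" using assms(1,2) unfolding pinned_def by simp
next
  fix j assume j: "j < length (a # L)"
  show "\<exists>\<gamma>. \<forall>m. j < m \<and> m < length (a # L) \<longrightarrow> phi R ((a # L) ! j) ((a # L) ! m) = \<gamma>"
  proof (cases j)
    case 0
    then show ?thesis using assms(3) by (intro exI[of _ \<gamma>]) (auto simp: nth_Cons')
  next
    case (Suc j')
    then have "j' < length L" using j by simp
    then obtain g where g: "\<forall>m. j' < m \<and> m < length L \<longrightarrow> phi R (L ! j') (L ! m) = g"
      using assms(1) unfolding pinned_def by blast
    show ?thesis
    proof (intro exI[of _ g] allI impI)
      fix m assume "j < m \<and> m < length (a # L)"
      then obtain m' where "m = Suc m'" "j' < m'" "m' < length L" using Suc by (cases m) auto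
      then show "phi R ((a # L) ! j) ((a # L) ! m) = g" using g Suc by simp
    qed
  qed
qed

lemma chain:
  assumes R: "linear_order_on (UNIV - {0}) R"
  shows "leftover R X \<Longrightarrow> X \<subseteq> vecs d \<Longrightarrow>
    \<exists>L. pinned R L \<and> set L \<subseteq> X \<and> L \<noteq> [] \<and> card X \<le> 2 ^ (length L - 1)"
proof (induction rule: leftover.induct)
  case (single S)
  then obtain x where "S = {x}" by (auto simp: card_1_singleton_iff)
  then show ?case by (intro exI[of _ "[x]"]) (auto simp: pinned_def)
next
  case (split S A B \<gamma>)
  have gen: "\<exists>L. pinned R L \<and> set L \<subseteq> S \<and> L \<noteq> [] \<and> card S \<le> 2 ^ (length L - 1)"
    if H: "S = A' \<union> B'" "A' \<inter> B' = {}" "A' \<noteq> {}" "finite A'" "finite B'"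
       "\<exists>L. pinned R L \<and> set L \<subseteq> B' \<and> L \<noteq> [] \<and> card B' \<le> 2 ^ (length L - 1)"
       "\<forall>a\<in>A'. \<forall>b\<in>B'. phi R a b = g" "card A' \<le> card B'" for A' B' g
  proof -
    obtain L where L: "pinned R L" "set L \<subseteq> B'" "L \<noteq> []" "card B' \<le> 2 ^ (length L - 1)"
      using H(6) by blast
    obtain a where a: "a \<in> A'" using H(3) by auto
    have "a \<notin> set L" using a L(2) H(2) by auto
    then have P: "pinned R (a # L)" using pinned_cons[OF L(1)] a L(2) H(7) by blast
    have "card S = card A' + card B'" using H(1,2,4,5) card_Un_disjoint by blast
    also have "\<dots> \<le> 2 * 2 ^ (length L - 1)" using H(8) L(4) by simp
    also have "\<dots> = 2 ^ (length (a # L) - 1)" using L(3) by (cases L) auto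
    finally show ?thesis using P a L(2) H(1) by (intro exI[of _ "a # L"]) auto
  qed
  have fA: "finite A" "finite B" using leftover_fin split.hyps by blast+
  have sA: "A \<subseteq> vecs d" "B \<subseteq> vecs d" using split.prems split.hyps(1) by auto
  show ?case
  proof (cases "card A \<le> card B")
    case True
    then show ?thesis using gen[of A B \<gamma>] split fA sA by blast
  next
    case False
    have "\<forall>b\<in>B. \<forall>a\<in>A. phi R b a = \<gamma>"
      using split.hyps(2,8) phi_sym[OF R] sA by (metis disjoint_iff subsetD)
    then show ?thesis using gen[of B A \<gamma>] split fA sA False by (auto simp: Un_commute Int_commute)
  qed
qed

lemma pinned_tri:
  assumes P: "pinned R L" and V: "set L \<subseteq> vecs d" and ne: "L \<noteq> []"
  shows "\<exists>g \<beta>. (\<forall>j<length L - 1. \<forall>m. j < m \<and> m \<le> length L - 1 \<longrightarrow> fdot d (g j) (vf (L ! m)) = \<beta> j)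
             \<and> (\<forall>j<length L - 1. fdot d (g j) (vf (L ! j)) \<noteq> \<beta> j)"
proof -
  define k where "k = length L - 1"
  have len: "\<forall>y\<in>set L. length y = d" using V by (auto simp: vecs_def)
  have "\<forall>j. \<exists>gb. j < k \<longrightarrow> (\<forall>m. j < m \<and> m \<le> k \<longrightarrow> fdot d (fst gb) (vf (L ! m)) = snd gb)
                               \<and> fdot d (fst gb) (vf (L ! j)) \<noteq> snd gb"
  proof
    fix j
    show "\<exists>gb. j < k \<longrightarrow> (\<forall>m. j < m \<and> m \<le> k \<longrightarrow> fdot d (fst gb) (vf (L ! m)) = snd gb)
                               \<and> fdot d (fst gb) (vf (L ! j)) \<noteq> snd gb"
    proof (cases "j < k")
      case True
      then have jl: "j < length L" using k_def by simp
      obtain \<gamma> where g: "\<forall>m. j < m \<and> m < length L \<longrightarrow> phi R (L ! j) (L ! m) = \<gamma>"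
        using P jl unfolding pinned_def by blast
      define Y where "Y = {L ! m | m. j < m \<and> m < length L}"
      have "\<forall>y\<in>Y. length y = d \<and> y \<noteq> L ! j \<and> phi R (L ! j) y = \<gamma>"
      proof
        fix y assume "y \<in> Y"
        then obtain m where m: "y = L ! m" "j < m" "m < length L" using Y_def by auto
        have "L ! m \<noteq> L ! j" using P m jl unfolding pinned_def by (simp add: nth_eq_iff_index_eq)
        then show "length y = d \<and> y \<noteq> L ! j \<and> phi R (L ! j) y = \<gamma>"
          using m g len by auto
      qed
      then obtain g0 b0 where gb: "\<forall>y\<in>Y. fdot d g0 (vf y) = b0" "fdot d g0 (vf (L ! j)) \<noteq> b0"
        using Pin[of "L ! j" d Y R \<gamma>] len jl by auto
      show ?thesis
      proof (intro exI[of _ "(g0, b0)"] impI conjI allI)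
        fix m assume "j < m \<and> m \<le> k"
        then have "L ! m \<in> Y" using Y_def k_def ne by (auto intro!: exI[of _ m])
        then show "fdot d (fst (g0, b0)) (vf (L ! m)) = snd (g0, b0)" using gb by simp
      next
        show "fdot d (fst (g0, b0)) (vf (L ! j)) \<noteq> snd (g0, b0)" using gb by simp
      qed
    qed simp
  qed
  then obtain GB where GB: "\<forall>j. j < k \<longrightarrow> (\<forall>m. j < m \<and> m \<le> k \<longrightarrow> fdot d (fst (GB j)) (vf (L ! m)) = snd (GB j))
                               \<and> fdot d (fst (GB j)) (vf (L ! j)) \<noteq> snd (GB j)"
    by metis
  show ?thesis using GB k_def by (intro exI[of _ "\<lambda>j. fst (GB j)"] exI[of _ "\<lambda>j. snd (GB j)"]) auto
qed

lemma pinned_dim: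
  assumes P: "pinned R L" and V: "set L \<subseteq> vecs d" and ne: "L \<noteq> []"
  shows "length L - 1 \<le> d"
proof -
  define k where "k = length L - 1"
  obtain g \<beta> where gb: "\<forall>j<k. \<forall>m. j < m \<and> m \<le> k \<longrightarrow> fdot d (g j) (vf (L ! m)) = \<beta> j"
      "\<forall>j<k. fdot d (g j) (vf (L ! j)) \<noteq> \<beta> j"
    using pinned_tri[OF P V ne] k_def by blast
  have I: "indep {..<k} (\<lambda>j i. vf (L ! j) i - vf (L ! k) i)"
    using tri_indep[of k d g "\<lambda>m. vf (L ! m)" \<beta>] gb by blast
  have len: "\<forall>m<length L. length (L ! m) = d"
  proof (intro allI impI)
    fix m assume "m < length L"
    then have "L ! m \<in> set L" by simp
    then show "length (L ! m) = d" using V by (auto simp: vecs_def)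
  qed
  have "\<forall>j\<in>{..<k}. inV d (\<lambda>i. vf (L ! j) i - vf (L ! k) i)"
    using len k_def ne inV_vf unfolding inV_def by (simp add: vf_def)
  moreover have "indep ({}::nat set) (\<lambda>_ _. 0::'a)" unfolding indep_def by simp
  ultimately have "card {..<k} + card ({}::nat set) \<le> d"
    using LA_bound[of "{..<k}" "{}" d "\<lambda>j i. vf (L ! j) i - vf (L ! k) i" "\<lambda>_ _. 0"] I by simp
  then show ?thesis using k_def by simp
qed



lemma col_facts:
  "col_ord x y = ZERO i c \<Longrightarrow> dotp x y = 0"
  "col_ord x y = UP i c \<Longrightarrow> dotp x y = dotp x x"
  "col_ord x y = DOWN i c \<Longrightarrow> dotp x y = dotp y y"
  using col_ord_cases[of x y] by auto

lemma orth_bound: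
  assumes R: "linear_order_on (UNIV - {0}) R"
    and lX: "leftover R X" and lY: "leftover R Y" and VX: "X \<subseteq> vecs d" and VY: "Y \<subseteq> vecs d"
    and D: "\<forall>x\<in>X. \<forall>x'\<in>X. \<forall>y\<in>Y. dotp x y = dotp x' y"
    and H: "\<forall>y\<in>Y. fdot d h (vf y) = b" and b: "b \<noteq> 0"
  shows "\<exists>k1 k2. card X \<le> 2 ^ k1 \<and> card Y \<le> 2 ^ k2 \<and> k1 + k2 + 1 \<le> d"
proof -
  obtain LX where LX: "pinned R LX" "set LX \<subseteq> X" "LX \<noteq> []" "card X \<le> 2 ^ (length LX - 1)"
    using chain[OF R lX VX] by blast
  obtain LY where LY: "pinned R LY" "set LY \<subseteq> Y" "LY \<noteq> []" "card Y \<le> 2 ^ (length LY - 1)"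
    using chain[OF R lY VY] by blast
  define kX where "kX = length LX - 1"
  define kY where "kY = length LY - 1"
  have sX: "set LX \<subseteq> vecs d" using LX VX by auto
  have sY: "set LY \<subseteq> vecs d" using LY VY by auto
  have lenX: "\<forall>m\<le>kX. length (LX ! m) = d \<and> LX ! m \<in> X"
  proof (intro allI impI)
    fix m assume "m \<le> kX"
    then have "m < length LX" using kX_def LX(3) by (cases LX) auto
    then have "LX ! m \<in> set LX" by simp
    then show "length (LX ! m) = d \<and> LX ! m \<in> X" using sX LX(2) by (auto simp: vecs_def)
  qed
  have lenY: "\<forall>m\<le>kY. length (LY ! m) = d \<and> LY ! m \<in> Y"
  proof (intro allI impI)
    fix m assume "m \<le> kY"
    then have "m < length LY" using kY_def LY(3) by (cases LY) auto
    then have "LY ! m \<in> set LY" by simp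
    then show "length (LY ! m) = d \<and> LY ! m \<in> Y" using sY LY(2) by (auto simp: vecs_def)
  qed
  obtain gX \<beta>X where gX: "\<forall>j<kX. \<forall>m. j < m \<and> m \<le> kX \<longrightarrow> fdot d (gX j) (vf (LX ! m)) = \<beta>X j"
      "\<forall>j<kX. fdot d (gX j) (vf (LX ! j)) \<noteq> \<beta>X j"
    using pinned_tri[OF LX(1) sX LX(3)] kX_def by blast
  obtain gY \<beta>Y where gY: "\<forall>j<kY. \<forall>m. j < m \<and> m \<le> kY \<longrightarrow> fdot d (gY j) (vf (LY ! m)) = \<beta>Y j"
      "\<forall>j<kY. fdot d (gY j) (vf (LY ! j)) \<noteq> \<beta>Y j"
    using pinned_tri[OF LY(1) sY LY(3)] kY_def by blast
  have I1: "indep {..<kX} (\<lambda>j i. vf (LX ! j) i - vf (LX ! kX) i)"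
    using tri_indep[of kX d gX "\<lambda>m. vf (LX ! m)" \<beta>X] gX by blast
  have I2: "indep {..<Suc kY} (\<lambda>m. vf (LY ! m))"
    using tri_indep_pts[of kY d gY "\<lambda>m. vf (LY ! m)" \<beta>Y h b] gY b H lenY by auto
  have V1: "\<forall>j\<in>{..<kX}. inV d (\<lambda>i. vf (LX ! j) i - vf (LX ! kX) i)"
    using lenX unfolding inV_def by (simp add: vf_def)
  have V2: "\<forall>j\<in>{..<Suc kY}. inV d (vf (LY ! j))"
    using lenY inV_vf by (metis lessThan_iff less_Suc_eq_le)
  have O: "\<forall>j\<in>{..<kX}. \<forall>m\<in>{..<Suc kY}. fdot d (\<lambda>i. vf (LX ! j) i - vf (LX ! kX) i) (vf (LY ! m)) = 0"
  proof (intro ballI)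
    fix j m assume j: "j \<in> {..<kX}" and m: "m \<in> {..<Suc kY}"
    have "fdot d (\<lambda>i. vf (LX ! j) i - vf (LX ! kX) i) (vf (LY ! m))
        = fdot d (vf (LY ! m)) (vf (LX ! j)) - fdot d (vf (LY ! m)) (vf (LX ! kX))"
      by (simp add: fdot_comm[of d _ "vf (LY ! m)"] fdot_diff)
    also have "\<dots> = dotp (LX ! j) (LY ! m) - dotp (LX ! kX) (LY ! m)"
      using lenX lenY j m dotp_vf dotp_comm by (metis less_Suc_eq_le lessThan_iff less_imp_le order_refl)
    also have "\<dots> = 0" using D lenX lenY j m by simp
    finally show "fdot d (\<lambda>i. vf (LX ! j) i - vf (LX ! kX) i) (vf (LY ! m)) = 0" .
  qed
  have "card {..<kX} + card {..<Suc kY} \<le> d"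
    by (rule LA_bound[OF _ _ V1 V2 I1 I2 O]) auto
  then show ?thesis using LX(4) LY(4) kX_def kY_def
    by (intro exI[of _ kX] exI[of _ kY]) auto
qed

lemma G2:
  assumes R: "linear_order_on (UNIV - {0}) R"
    and lA: "leftover R A" and lB: "leftover R B" and VA: "A \<subseteq> vecs d" and VB: "B \<subseteq> vecs d"
    and dj: "A \<inter> B = {}" and col: "\<forall>a\<in>A. \<forall>b\<in>B. phi R a b = \<gamma>"
  shows "\<exists>k1 k2. card A \<le> 2 ^ k1 \<and> card B \<le> 2 ^ k2 \<and> k1 + k2 + 1 \<le> d"
proof -
  obtain a0 where a0: "a0 \<in> A" using leftover_fin[OF lA] by auto
  obtain b0 where b0: "b0 \<in> B" using leftover_fin[OF lB] by auto
  have len: "\<forall>x\<in>A \<union> B. length x = d \<and> 0 \<notin> set x" using VA VB by (auto simp: vecs_def)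
  have ne: "\<forall>a\<in>A. \<forall>b\<in>B. a \<noteq> b" using dj by auto
  have swap: "\<exists>k1 k2. card A \<le> 2 ^ k1 \<and> card B \<le> 2 ^ k2 \<and> k1 + k2 + 1 \<le> d"
    if "\<exists>k1 k2. card B \<le> 2 ^ k1 \<and> card A \<le> 2 ^ k2 \<and> k1 + k2 + 1 \<le> d"
    using that by (metis add.commute)
  show ?thesis
  proof (cases "isdot \<gamma>")
    case True
    define v where "v = dotp a0 b0"
    have dv: "\<forall>a\<in>A. \<forall>b\<in>B. dotp a b = v"
    proof (intro ballI)
      fix a b assume "a \<in> A" "b \<in> B"
      then have "\<gamma> = DOT (dotp a b)" "\<gamma> = DOT (dotp a0 b0)"
        using phi_info[of a b R \<gamma>] phi_info[of a0 b0 R \<gamma>] len col a0 b0 True by auto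
      then show "dotp a b = v" using v_def by simp
    qed
    have v0: "v \<noteq> 0" using phi_info[of a0 b0 R \<gamma>] len col a0 b0 True v_def by auto
    show ?thesis
    proof (rule orth_bound[OF R lA lB VA VB _ _ v0])
      show "\<forall>x\<in>A. \<forall>x'\<in>A. \<forall>y\<in>B. dotp x y = dotp x' y" using dv by simp
      show "\<forall>y\<in>B. fdot d (vf a0) (vf y) = v" using dv a0 len dotp_vf by (metis UnCI)
    qed
  next
    case False
    define k0 where "k0 = first_diff a0 b0"
    have k0: "k0 < d" "a0 ! k0 \<noteq> b0 ! k0"
      using fd_props[of a0 b0] len a0 b0 ne k0_def by auto
    have info: "first_diff a b = k0 \<and> a ! k0 + b ! k0 = a0 ! k0 + b0 ! k0" if "a \<in> A" "b \<in> B" for a b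
    proof -
      have "cidx \<gamma> = Suc (first_diff a b)" "csum \<gamma> = a ! first_diff a b + b ! first_diff a b"
           "cidx \<gamma> = Suc k0" "csum \<gamma> = a0 ! k0 + b0 ! k0"
        using phi_info[of a b R \<gamma>] phi_info[of a0 b0 R \<gamma>] len col a0 b0 False that k0_def by auto
      then show ?thesis by simp
    qed
    have cA: "\<forall>a\<in>A. a ! k0 = a0 ! k0" using info b0 by (metis add_right_cancel)
    have cB: "\<forall>b\<in>B. b ! k0 = b0 ! k0" using info a0 by (metis add_left_cancel)
    have nzA: "a0 ! k0 \<noteq> 0" using len a0 k0 by (metis UnCI nth_mem)
    have nzB: "b0 ! k0 \<noteq> 0" using len b0 k0 by (metis UnCI nth_mem)
    define e where "e = (\<lambda>i::nat. if i = k0 then (1::'a) else 0)"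
    have eA: "\<forall>a\<in>A. fdot d e (vf a) = a0 ! k0"
    proof
      fix a assume "a \<in> A"
      have "fdot d e (vf a) = vf a k0" using fdot_e[of d k0 "vf a"] k0 unfolding e_def by simp
      then show "fdot d e (vf a) = a0 ! k0" using cA len k0 \<open>a \<in> A\<close> by (simp add: vf_def)
    qed
    have eB: "\<forall>b\<in>B. fdot d e (vf b) = b0 ! k0"
    proof
      fix b assume "b \<in> B"
      have "fdot d e (vf b) = vf b k0" using fdot_e[of d k0 "vf b"] k0 unfolding e_def by simp
      then show "fdot d e (vf b) = b0 ! k0" using cB len k0 \<open>b \<in> B\<close> by (simp add: vf_def)
    qed
    have lex: "lexless R a b \<longleftrightarrow> (a0 ! k0, b0 ! k0) \<in> R" if "a \<in> A" "b \<in> B" for a b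
      using info[OF that] cA cB that ne unfolding lexless_def by auto
    have dsym: "\<forall>a\<in>A. \<forall>b\<in>B. dotp a b = dotp b a" using len dotp_comm by (metis UnCI)
    obtain i c where ic: "\<gamma> = ZERO i c \<or> \<gamma> = UP i c \<or> \<gamma> = DOWN i c"
      using False by (cases \<gamma>) auto
    have colAB: "\<forall>a\<in>A. \<forall>b\<in>B. (if (a0 ! k0, b0 ! k0) \<in> R then col_ord a b else col_ord b a) = \<gamma>"
      using col lex unfolding phi_def by auto
    show ?thesis
    proof (cases "\<gamma> = ZERO i c")
      case True
      have "\<forall>a\<in>A. \<forall>b\<in>B. dotp a b = 0"
        using colAB True col_facts(1) dsym by (metis (full_types))
      then show ?thesis
        by (intro orth_bound[OF R lA lB VA VB _ eB nzB]) simp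
    next
      case nZ: False
      show ?thesis
      proof (cases "\<gamma> = UP i c")
        case True
        show ?thesis
        proof (cases "(a0 ! k0, b0 ! k0) \<in> R")
          case True
          then have "\<forall>a\<in>A. \<forall>b\<in>B. dotp a b = dotp a a"
            using colAB \<open>\<gamma> = UP i c\<close> col_facts(2) by metis
          then have "\<forall>x\<in>B. \<forall>x'\<in>B. \<forall>y\<in>A. dotp x y = dotp x' y" using dsym by metis
          then show ?thesis by (intro swap orth_bound[OF R lB lA VB VA _ eA nzA])
        next
          case False
          then have "\<forall>a\<in>A. \<forall>b\<in>B. dotp b a = dotp b b"
            using colAB \<open>\<gamma> = UP i c\<close> col_facts(2) by metis
          then have "\<forall>x\<in>A. \<forall>x'\<in>A. \<forall>y\<in>B. dotp x y = dotp x' y" using dsym by metis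
          then show ?thesis by (intro orth_bound[OF R lA lB VA VB _ eB nzB])
        qed
      next
        case nU: False
        then have Dn: "\<gamma> = DOWN i c" using ic nZ by auto
        show ?thesis
        proof (cases "(a0 ! k0, b0 ! k0) \<in> R")
          case True
          then have "\<forall>a\<in>A. \<forall>b\<in>B. dotp a b = dotp b b"
            using colAB Dn col_facts(3) by metis
          then have "\<forall>x\<in>A. \<forall>x'\<in>A. \<forall>y\<in>B. dotp x y = dotp x' y" by metis
          then show ?thesis by (intro orth_bound[OF R lA lB VA VB _ eB nzB])
        next
          case False
          then have "\<forall>a\<in>A. \<forall>b\<in>B. dotp b a = dotp a a"
            using colAB Dn col_facts(3) by metis
          then have "\<forall>x\<in>B. \<forall>x'\<in>B. \<forall>y\<in>A. dotp x y = dotp x' y" by metis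
          then show ?thesis by (intro swap orth_bound[OF R lB lA VB VA _ eA nzA])
        qed
      qed
    qed
  qed
qed



definition pinrel :: "'a::field rel \<Rightarrow> 'a list list \<Rightarrow> 'a list set \<Rightarrow> bool" where
  "pinrel R P Y \<longleftrightarrow> distinct P \<and> set P \<inter> Y = {} \<and>
     (\<forall>j<length P. \<exists>\<gamma>. (\<forall>m. j < m \<and> m < length P \<longrightarrow> phi R (P ! j) (P ! m) = \<gamma>) \<and>
                        (\<forall>y\<in>Y. phi R (P ! j) y = \<gamma>))"

lemma pin_append:
  assumes P: "pinrel R P Y" and L: "pinned R L" and s: "set L \<subseteq> Y"
  shows "pinned R (P @ L)"
  unfolding pinned_def
proof (intro conjI allI impI)
  show "distinct (P @ L)" using P L s unfolding pinrel_def pinned_def by auto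
next
  fix j assume j: "j < length (P @ L)"
  show "\<exists>\<gamma>. \<forall>m. j < m \<and> m < length (P @ L) \<longrightarrow> phi R ((P @ L) ! j) ((P @ L) ! m) = \<gamma>"
  proof (cases "j < length P")
    case True
    then obtain g where g: "\<forall>m. j < m \<and> m < length P \<longrightarrow> phi R (P ! j) (P ! m) = g"
        "\<forall>y\<in>Y. phi R (P ! j) y = g"
      using P unfolding pinrel_def by blast
    show ?thesis
    proof (intro exI[of _ g] allI impI)
      fix m assume m: "j < m \<and> m < length (P @ L)"
      show "phi R ((P @ L) ! j) ((P @ L) ! m) = g"
      proof (cases "m < length P")
        case True then show ?thesis using g m \<open>j < length P\<close> by (simp add: nth_append)
      next
        case False
        then have "m - length P < length L" using m by simp linarith
        then have "L ! (m - length P) \<in> Y" using s nth_mem by blast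
        then show ?thesis using g False \<open>j < length P\<close> by (simp add: nth_append)
      qed
    qed
  next
    case False
    define j' where "j' = j - length P"
    have j': "j' < length L" using j False j'_def by simp
    then obtain g where g: "\<forall>m. j' < m \<and> m < length L \<longrightarrow> phi R (L ! j') (L ! m) = g"
      using L unfolding pinned_def by blast
    show ?thesis
    proof (intro exI[of _ g] allI impI)
      fix m assume m: "j < m \<and> m < length (P @ L)"
      then have "j' < m - length P" "m - length P < length L" "\<not> m < length P"
        using False j'_def by auto
      then show "phi R ((P @ L) ! j) ((P @ L) ! m) = g" using g False j'_def by (simp add: nth_append)
    qed
  qed
qed

lemma pinrel_snoc:
  assumes P: "pinrel R P Y" and BY: "B \<subseteq> Y" and aY: "a \<in> Y" and aB: "a \<notin> B"
    and col: "\<forall>b\<in>B. phi R a b = \<gamma>"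
  shows "pinrel R (P @ [a]) B"
  unfolding pinrel_def
proof (intro conjI allI impI)
  show "distinct (P @ [a])" using P aY unfolding pinrel_def by auto
  show "set (P @ [a]) \<inter> B = {}" using P aB BY unfolding pinrel_def by auto
next
  fix j assume j: "j < length (P @ [a])"
  show "\<exists>\<gamma>. (\<forall>m. j < m \<and> m < length (P @ [a]) \<longrightarrow> phi R ((P @ [a]) ! j) ((P @ [a]) ! m) = \<gamma>) \<and>
                        (\<forall>y\<in>B. phi R ((P @ [a]) ! j) y = \<gamma>)"
  proof (cases "j < length P")
    case True
    then obtain g where g: "\<forall>m. j < m \<and> m < length P \<longrightarrow> phi R (P ! j) (P ! m) = g"
        "\<forall>y\<in>Y. phi R (P ! j) y = g"
      using P unfolding pinrel_def by blast
    show ?thesis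
    proof (intro exI[of _ g] conjI allI impI ballI)
      fix m assume m: "j < m \<and> m < length (P @ [a])"
      show "phi R ((P @ [a]) ! j) ((P @ [a]) ! m) = g"
      proof (cases "m < length P")
        case True then show ?thesis using g m \<open>j < length P\<close> by (simp add: nth_append)
      next
        case False
        then have "m = length P" using m by simp
        then show ?thesis using g aY \<open>j < length P\<close> by (simp add: nth_append)
      qed
    next
      fix y assume "y \<in> B"
      then show "phi R ((P @ [a]) ! j) y = g" using g BY True by (auto simp: nth_append)
    qed
  next
    case False
    then have "j = length P" using j by simp
    then show ?thesis using col by (intro exI[of _ \<gamma>]) auto
  qed
qed

definition good :: "nat \<Rightarrow> nat \<Rightarrow> nat \<Rightarrow> nat list \<Rightarrow> bool" where
  "good d n t xs \<longleftrightarrow> (\<forall>x\<in>set xs. 1 \<le> x) \<and> sum_list xs = n - 1 \<and>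
     (\<forall>i<length xs. xs ! i \<le> (n - sum_list (take i xs)) div 2 \<and>
        (\<exists>k1 k2. xs ! i \<le> 2 ^ k1 \<and> n - sum_list (take i xs) - xs ! i \<le> 2 ^ k2 \<and> k1 + k2 + 1 \<le> d) \<and>
        (\<exists>k. n - sum_list (take i xs) - xs ! i \<le> 2 ^ k \<and> k + i + 1 + t \<le> d))"

lemma good_cons:
  assumes n: "n = na + nb" and na: "1 \<le> na" "na \<le> nb" and g: "good d nb (Suc t) xs"
    and G: "\<exists>k1 k2. na \<le> 2 ^ k1 \<and> nb \<le> 2 ^ k2 \<and> k1 + k2 + 1 \<le> d"
    and K: "\<exists>k. nb \<le> 2 ^ k \<and> k + 1 + t \<le> d"
  shows "good d n t (na # xs)"
  unfolding good_def
proof (intro conjI)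
  show "\<forall>x\<in>set (na # xs). 1 \<le> x" using na g unfolding good_def by auto
  show "sum_list (na # xs) = n - 1" using n na g unfolding good_def by auto
next
  show "\<forall>i<length (na # xs). (na # xs) ! i \<le> (n - sum_list (take i (na # xs))) div 2 \<and>
        (\<exists>k1 k2. (na # xs) ! i \<le> 2 ^ k1 \<and> n - sum_list (take i (na # xs)) - (na # xs) ! i \<le> 2 ^ k2 \<and> k1 + k2 + 1 \<le> d) \<and>
        (\<exists>k. n - sum_list (take i (na # xs)) - (na # xs) ! i \<le> 2 ^ k \<and> k + i + 1 + t \<le> d)"
  proof (intro allI impI)
  fix i assume i: "i < length (na # xs)"
  show "(na # xs) ! i \<le> (n - sum_list (take i (na # xs))) div 2 \<and>
        (\<exists>k1 k2. (na # xs) ! i \<le> 2 ^ k1 \<and> n - sum_list (take i (na # xs)) - (na # xs) ! i \<le> 2 ^ k2 \<and> k1 + k2 + 1 \<le> d) \<and>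
        (\<exists>k. n - sum_list (take i (na # xs)) - (na # xs) ! i \<le> 2 ^ k \<and> k + i + 1 + t \<le> d)"
  proof (cases i)
    case 0
    then show ?thesis using n na G K by auto
  next
    case (Suc i')
    then have i': "i' < length xs" using i by simp
    have e: "n - sum_list (take i (na # xs)) = nb - sum_list (take i' xs)" using Suc n by simp
    have "xs ! i' \<le> (nb - sum_list (take i' xs)) div 2 \<and>
        (\<exists>k1 k2. xs ! i' \<le> 2 ^ k1 \<and> nb - sum_list (take i' xs) - xs ! i' \<le> 2 ^ k2 \<and> k1 + k2 + 1 \<le> d) \<and>
        (\<exists>k. nb - sum_list (take i' xs) - xs ! i' \<le> 2 ^ k \<and> k + i' + 1 + Suc t \<le> d)"
      using g i' unfolding good_def by blast
    then show ?thesis using e Suc by auto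
  qed
  qed
qed

lemma main:
  assumes R: "linear_order_on (UNIV - {0}) R"
  shows "leftover R Y \<Longrightarrow> Y \<subseteq> vecs d \<Longrightarrow> pinrel R P Y \<Longrightarrow> set P \<subseteq> vecs d \<Longrightarrow>
    \<exists>xs. good d (card Y) (length P) xs"
proof (induction arbitrary: P rule: leftover.induct)
  case (single S)
  then show ?case by (intro exI[of _ "[]"]) (simp add: good_def)
next
  case (split S A B \<gamma>)
  have gen: "\<exists>xs. good d (card S) (length P) xs"
    if H: "S = A' \<union> B'" "A' \<inter> B' = {}" "leftover R A'" "leftover R B'"
       "\<forall>a\<in>A'. \<forall>b\<in>B'. phi R a b = g" "card A' \<le> card B'"
       "\<And>P. B' \<subseteq> vecs d \<Longrightarrow> pinrel R P B' \<Longrightarrow> set P \<subseteq> vecs d \<Longrightarrow> \<exists>xs. good d (card B') (length P) xs"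
     for A' B' g
  proof -
    have fA: "finite A'" "A' \<noteq> {}" "finite B'" "B' \<noteq> {}" using leftover_fin H(3,4) by auto
    obtain a where a: "a \<in> A'" using fA by auto
    have VA: "A' \<subseteq> vecs d" "B' \<subseteq> vecs d" using split.prems(1) H(1) by auto
    have aB: "a \<notin> B'" using a H(2) by auto
    have PR: "pinrel R (P @ [a]) B'"
      using pinrel_snoc[OF split.prems(2), of B' a g] H(1,5) a aB by auto
    have sP: "set (P @ [a]) \<subseteq> vecs d" using split.prems(3) VA a by auto
    obtain xs where xs: "good d (card B') (length (P @ [a])) xs" using H(7)[OF VA(2) PR sP] by blast
    obtain LB where LB: "pinned R LB" "set LB \<subseteq> B'" "LB \<noteq> []" "card B' \<le> 2 ^ (length LB - 1)"
      using chain[OF R H(4) VA(2)] by blast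
    have "pinned R ((P @ [a]) @ LB)" using pin_append[OF PR LB(1,2)] .
    then have "length ((P @ [a]) @ LB) - 1 \<le> d"
      using pinned_dim[of R "(P @ [a]) @ LB" d] sP LB(2) VA by auto
    then have K: "\<exists>k. card B' \<le> 2 ^ k \<and> k + 1 + length P \<le> d"
      using LB(3,4) by (intro exI[of _ "length LB - 1"]) (cases LB; auto)
    have G: "\<exists>k1 k2. card A' \<le> 2 ^ k1 \<and> card B' \<le> 2 ^ k2 \<and> k1 + k2 + 1 \<le> d"
      using G2[OF R H(3,4) VA H(2,5)] .
    have cS: "card S = card A' + card B'" using H(1,2) fA card_Un_disjoint by blast
    have "1 \<le> card A'" using fA by (simp add: Suc_leI card_gt_0_iff)
    then show ?thesis
      using good_cons[OF cS _ H(6) _ G K] xs by auto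
  qed
  have fA: "finite A" "finite B" using leftover_fin split.hyps by blast+
  have sA: "A \<subseteq> vecs d" "B \<subseteq> vecs d" using split.prems split.hyps(1) by auto
  show ?case
  proof (cases "card A \<le> card B")
    case True
    then show ?thesis using gen[of A B \<gamma>] split by blast
  next
    case False
    have "\<forall>b\<in>B. \<forall>a\<in>A. phi R b a = \<gamma>"
      using split.hyps(2,8) phi_sym[OF R] sA by (metis disjoint_iff subsetD)
    then show ?thesis using gen[of B A \<gamma>] split False by (auto simp: Un_commute Int_commute)
  qed
qed

lemma sum_shift: fixes n :: nat shows "(\<Sum>i\<in>{1..n}. f (i - 1)) = (\<Sum>i<n. f i :: nat)"
  by (induction n) (auto simp: atLeastAtMostSuc_conv)

lemma sum_shift2: fixes n :: nat shows "(\<Sum>i\<in>{1..<Suc n}. f (i - 1)) = (\<Sum>i<n. f i :: nat)"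
  using sum_shift[of f n] by (simp add: atLeastLessThanSuc_atLeastAtMost)

lemma sum_take: "m \<le> length xs \<Longrightarrow> sum_list (take m xs) = (\<Sum>j<m. xs ! j :: nat)"
  by (simp add: sum_list_sum_nth atLeast0LessThan min_absorb2)

lemma clog_le: "1 \<le> m \<Longrightarrow> m \<le> 2 ^ k \<Longrightarrow> \<lceil>log 2 (real m)\<rceil> \<le> int k"
  by (simp add: ceiling_le_iff log2_of_power_le)



theorem lemma3p11:
  fixes R :: "'a::{finite,field} rel"
    and d p T :: nat
    and S :: "'a list set"
    and a :: "nat \<Rightarrow> 'a list"
    and \<alpha> :: "nat \<Rightarrow> 'a color"
  assumes "odd (card (UNIV :: 'a set))"
    and "linear_order_on (UNIV - {0}) R"
    and "d \<ge> 1" and "p \<ge> 2"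
    and "S \<subseteq> vecs d" and "card S = p"
    and "leftover R S"
    and "\<forall>i\<in>{1..T}. a i \<in> vecs d \<and> a i \<notin> S"
    and "inj_on a {1..T}"
    and "\<forall>i j. 1 \<le> i \<and> i < j \<and> j \<le> T \<longrightarrow> phi R (a i) (a j) = \<alpha> i"
    and "\<forall>i\<in>{1..T}. \<forall>s\<in>S. phi R (a i) s = \<alpha> i"
  shows "\<exists>(t::nat) (x::nat \<Rightarrow> nat).
           (\<forall>i\<in>{1..t}. x i \<ge> 1) \<and> (\<Sum>i\<in>{1..t}. x i) = p - 1 \<and>
           (\<forall>i\<in>{1..t}. let s = (\<Sum>j\<in>{1..<i}. x j) in
              1 \<le> x i \<and> x i \<le> (p - s) div 2 \<and>
              \<lceil>log 2 (real (x i))\<rceil> + \<lceil>log 2 (real p - real s - real (x i))\<rceil> \<le> int d - 1 \<and>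
              \<lceil>log 2 (real p - real s - real (x i))\<rceil> \<le> int d - int i - int T)"
proof -
  note R = assms(2)
  define P where "P = map a [1..<Suc T]"
  have lenP: "length P = T" using P_def by simp
  have nthP: "P ! j = a (Suc j)" if "j < T" for j using that P_def by (simp del: upt_Suc)
  have setP: "set P = a ` {1..T}" using P_def by (simp add: atLeastLessThanSuc_atLeastAtMost del: upt_Suc)
  have PR: "pinrel R P S"
    unfolding pinrel_def
  proof (intro conjI allI impI)
    show "distinct P" using P_def assms(9)
      by (simp add: distinct_map atLeastLessThanSuc_atLeastAtMost del: upt_Suc)
    show "set P \<inter> S = {}" using setP assms(8) by auto
  next
    fix j assume j: "j < length P"
    show "\<exists>\<gamma>. (\<forall>m. j < m \<and> m < length P \<longrightarrow> phi R (P ! j) (P ! m) = \<gamma>) \<and> (\<forall>y\<in>S. phi R (P ! j) y = \<gamma>)"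
    proof (intro exI[of _ "\<alpha> (Suc j)"] conjI allI impI ballI)
      fix m assume "j < m \<and> m < length P"
      then show "phi R (P ! j) (P ! m) = \<alpha> (Suc j)"
        using assms(10) nthP lenP j by auto
    next
      fix y assume "y \<in> S"
      then show "phi R (P ! j) y = \<alpha> (Suc j)" using assms(11) nthP lenP j by auto
    qed
  qed
  have sP: "set P \<subseteq> vecs d" using setP assms(8) by auto
  obtain xs where g: "good d p T xs"
    using main[OF R assms(7,5) PR sP] assms(6) lenP by auto
  define t where "t = length xs"
  define x where "x = (\<lambda>i. xs ! (i - 1))"
  have g1: "\<forall>y\<in>set xs. 1 \<le> y" "sum_list xs = p - 1" using g unfolding good_def by auto
  have sumx: "(\<Sum>i\<in>{1..t}. x i) = p - 1"
    using sum_shift[of "\<lambda>i. xs ! i" t] sum_take[of t xs] g1 t_def x_def by simp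
  show ?thesis
  proof (intro exI[of _ t] exI[of _ x] conjI ballI)
    fix i assume "i \<in> {1..t}"
    then have "i - 1 < length xs" using t_def by auto
    then show "1 \<le> x i" using g1 x_def by simp
  next
    show "(\<Sum>i\<in>{1..t}. x i) = p - 1" by (rule sumx)
  next
    fix i assume i: "i \<in> {1..t}"
    define i' where "i' = i - 1"
    have ii: "i = Suc i'" "i' < length xs" using i i'_def t_def by auto
    define s where "s = (\<Sum>j\<in>{1..<i}. x j)"
    have s: "s = sum_list (take i' xs)"
      using sum_shift2[of "\<lambda>j. xs ! j" i'] sum_take[of i' xs] ii s_def x_def by simp
    have xi: "x i = xs ! i'" using x_def i'_def by simp
    have G: "xs ! i' \<le> (p - sum_list (take i' xs)) div 2 \<and>
        (\<exists>k1 k2. xs ! i' \<le> 2 ^ k1 \<and> p - sum_list (take i' xs) - xs ! i' \<le> 2 ^ k2 \<and> k1 + k2 + 1 \<le> d) \<and>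
        (\<exists>k. p - sum_list (take i' xs) - xs ! i' \<le> 2 ^ k \<and> k + i' + 1 + T \<le> d)"
      using g ii unfolding good_def by blast
    have x1: "1 \<le> x i" using xi g1 ii by simp
    have "sum_list (take (Suc i') xs) = s + x i" using s xi ii by (simp add: take_Suc_conv_app_nth)
    moreover have "sum_list xs = sum_list (take (Suc i') xs) + sum_list (drop (Suc i') xs)"
      by (metis append_take_drop_id sum_list_append)
    ultimately have le: "s + x i \<le> p - 1" using g1 by linarith
    have r1: "1 \<le> p - s - x i" using le assms(4) by linarith
    have re: "real p - real s - real (x i) = real (p - s - x i)" using le assms(4) by linarith
    obtain k1 k2 where K: "x i \<le> 2 ^ k1" "p - s - x i \<le> 2 ^ k2" "k1 + k2 + 1 \<le> d"
      using G s xi by auto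
    obtain k where K': "p - s - x i \<le> 2 ^ k" "k + i' + 1 + T \<le> d" using G s xi by auto
    have c1: "\<lceil>log 2 (real (x i))\<rceil> \<le> int k1" using clog_le[OF x1 K(1)] .
    have c2: "\<lceil>log 2 (real (p - s - x i))\<rceil> \<le> int k2" using clog_le[OF r1 K(2)] .
    have c3: "\<lceil>log 2 (real (p - s - x i))\<rceil> \<le> int k" using clog_le[OF r1 K'(1)] .
    show "let s = (\<Sum>j\<in>{1..<i}. x j) in
              1 \<le> x i \<and> x i \<le> (p - s) div 2 \<and>
              \<lceil>log 2 (real (x i))\<rceil> + \<lceil>log 2 (real p - real s - real (x i))\<rceil> \<le> int d - 1 \<and>
              \<lceil>log 2 (real p - real s - real (x i))\<rceil> \<le> int d - int i - int T"
      unfolding Let_def s_def[symmetric] re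
      using x1 G s xi c1 c2 c3 K K' ii by auto
  qed
qed


end
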